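(* Let $X,Y$ be $\mathfrak{Q}$-preordered $\mathfrak{Q}$-subsets and $f\colon X\to Y$, $g\colon Y\to X$ $\mathfrak{Q}$-order-preserving maps. The following are equivalent: (i) $f\dashv g$ is a $\mathfrak{Q}$-Galois connection; (ii) $(f_{\natural})_{\uparrow}\colon\mathsf{P}X\to\mathsf{P}^{\dagger}Y$ and $(g^{\natural})^{\downarrow}\colon\mathsf{P}^{\dagger}Y\to\mathsf{P}X$ satisfy $(f_{\natural})_{\uparrow}\dashv(g^{\natural})^{\downarrow}$ (a $\mathfrak{Q}$-polarity from $X$ to $Y$); (iii) $(f_{\natural})^{*}\colon\mathsf{P}Y\to\mathsf{P}X$ and $(g^{\natural})_{*}\colon\mathsf{P}X\to\mathsf{P}Y$ satisfy $(f_{\natural})^{*}\dashv(g^{\natural})_{*}$ (a $\mathfrak{Q}$-axiality from $Y$ to $X$); (iv) $(f_{\natural})_{\dagger}\colon\mathsf{P}^{\dagger}Y\to\mathsf{P}^{\dagger}X$ and $(g^{\natural})^{\dagger}\colon\mathsf{P}^{\dagger}X\to\mathsf{P}^{\dagger}Y$ satisfy $(f_{\natural})_{\dagger}\dashv(g^{\natural})^{\dagger}$ (a dual $\mathfrak{Q}$-axiality from $Y$ to $X$).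
   Context: $(\mathfrak{Q},\&,e)$ is a non-trivial unital quantale (complete lattice with associative multiplication with unit $e$ preserving joins in each variable, $\bot<e$), implications $p\& q\le r\iff p\le r/ q\iff q\le p\backslash r$, $\mathcal{D}\mathfrak{Q}(p,q)=\{u\mid (u/ p)\& p=u=q\&(q\backslash u)\}$. A $\mathfrak{Q}$-subset is a set $X$ with $|\cdot|\colon X\to\mathfrak{Q}$; $\mathbf{1}_q$ is $\{*\}$ with $|*|=q$. A $\mathfrak{Q}$-relation from $X$ to $Y$ is a map $\phi\colon X\times Y\to\mathfrak{Q}$ with $\phi(x,y)\in\mathcal{D}\mathfrak{Q}(|x|,|y|)$, ordered pointwise; composition $(\psi\circ\phi)(x,z)=\bigvee_y(\psi(y,z)/|y|)\&\phi(x,y)$; $\xi\swarrow\phi$ is the largest $\psi'$ with $\psi'\circ\phi\le\xi$ and $\psi\searrow\xi$ the largest $\phi'$ with $\psi\circ\phi'\le\xi$. A $\mathfrak{Q}$-preordered $\mathfrak{Q}$-subset is a $\mathfrak{Q}$-subset $X$ with a $\mathfrak{Q}$-relation $1_X^{\natural}$ on $X$ with $\mathrm{id}_X\le 1_X^{\natural}$ ($\mathrm{id}_X(x,x)=|x|$, else $\bot$) and $1_X^{\natural}\circ 1_X^{\natural}\le 1_X^{\natural}$. A $\mathfrak{Q}$-order-preserving map $f\colon X\to Y$ satisfies $|fx|=|x|$ and $1_X^{\natural}(x,x')\le 1_Y^{\natural}(fx,fx')$; for such maps $h,k\colon A\to B$, $h\le k$ means $|a|\le 1_B^{\natural}(ha,ka)$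 for all $a$; a $\mathfrak{Q}$-Galois connection $h\dashv k$ ($h\colon A\to B$, $k\colon B\to A$) means $1_A\le kh$ and $hk\le 1_B$. Graph and cograph: $f_{\natural}(x,y)=1_Y^{\natural}(fx,y)$ (from $X$ to $Y$), $f^{\natural}(y,x)=1_Y^{\natural}(y,fx)$ (from $Y$ to $X$); thus $g^{\natural}(x,y)=1_X^{\natural}(x,gy)$ is a relation from $X$ to $Y$. $\mathsf{P}X$ consists of $\mathfrak{Q}$-relations $\mu$ from $X$ to some $\mathbf{1}_q$ with $\mu\circ 1_X^{\natural}\le\mu$, with $|\mu|=q$ and $\mathfrak{Q}$-preorder $1_{\mathsf{P}X}^{\natural}(\mu,\mu')=\mu'\swarrow\mu$; $\mathsf{P}^{\dagger}X$ consists of $\mathfrak{Q}$-relations $\lambda$ from some $\mathbf{1}_q$ to $X$ with $1_X^{\natural}\circ\lambda\le\lambda$, with $|\lambda|=q$ and $1_{\mathsf{P}^{\dagger}X}^{\natural}(\lambda,\lambda')=\lambda'\searrow\lambda$. For a $\mathfrak{Q}$-relation $\phi$ from $X$ to $Y$ with $1_Y^{\natural}\circ\phi\circ1_X^{\natural}\le\phi$ (a $\mathfrak{Q}$-distributor, e.g. $f_{\natural}$, $g^{\natural}$): $\phi_{\uparrow}\mu=\phi\swarrow\mu$ ($\mathsf{P}X\to\mathsf{P}^{\dagger}Y$), $\phi^{\downarrow}\lambda'=\lambda'\searrow\phi$ ($\mathsf{P}^{\dagger}Y\to\mathsf{P}X$), $\phi^{*}\mu'=\mu'\circ\phi$ ($\mathsf{P}Y\to\mathsf{P}X$),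 $\phi_{*}\mu=\mu\swarrow\phi$ ($\mathsf{P}X\to\mathsf{P}Y$), $\phi_{\dagger}\lambda'=\phi\searrow\lambda'$ ($\mathsf{P}^{\dagger}Y\to\mathsf{P}^{\dagger}X$), $\phi^{\dagger}\lambda=\phi\circ\lambda$ ($\mathsf{P}^{\dagger}X\to\mathsf{P}^{\dagger}Y$); these are $\mathfrak{Q}$-order-preserving maps. *)

theory Defs
  imports Main
begin

definition quantale :: "('q::complete_lattice \<Rightarrow> 'q \<Rightarrow> 'q) \<Rightarrow> 'q \<Rightarrow> bool" where
  "quantale m e \<longleftrightarrow>
     (\<forall>a b c. m (m a b) c = m a (m b c)) \<and>
     (\<forall>a. m e a = a \<and> m a e = a) \<and>
     (\<forall>a S. m a (Sup S) = (SUP s\<in>S. m a s)) \<and>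
     (\<forall>S b. m (Sup S) b = (SUP s\<in>S. m s b)) \<and>
     bot < e"

text \<open>Right implication r / q (largest p with p & q \<le> r) and left implication
  p \ r (largest q with p & q \<le> r).\<close>

definition rdiv :: "('q::complete_lattice \<Rightarrow> 'q \<Rightarrow> 'q) \<Rightarrow> 'q \<Rightarrow> 'q \<Rightarrow> 'q" where
  "rdiv m r q = Sup {p. m p q \<le> r}"

definition ldiv :: "('q::complete_lattice \<Rightarrow> 'q \<Rightarrow> 'q) \<Rightarrow> 'q \<Rightarrow> 'q \<Rightarrow> 'q" where
  "ldiv m p r = Sup {q. m p q \<le> r}"

definition DQ :: "('q::complete_lattice \<Rightarrow> 'q \<Rightarrow> 'q) \<Rightarrow> 'q \<Rightarrow> 'q \<Rightarrow> 'q set" where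
  "DQ m p q = {u. m (rdiv m u p) p = u \<and> u = m q (ldiv m q u)}"

text \<open>A Q-subset is a carrier set X together with a type map tX.
  A Q-relation from (X,tX) to (Y,tY) is a function phi with phi x y in DQ(|x|,|y|)
  for x in X, y in Y (values outside the carriers are irrelevant).\<close>

definition is_qrel :: "('q::complete_lattice \<Rightarrow> 'q \<Rightarrow> 'q) \<Rightarrow> 'a set \<Rightarrow> ('a \<Rightarrow> 'q) \<Rightarrow>
    'b set \<Rightarrow> ('b \<Rightarrow> 'q) \<Rightarrow> ('a \<Rightarrow> 'b \<Rightarrow> 'q) \<Rightarrow> bool" where
  "is_qrel m X tX Y tY phi \<longleftrightarrow> (\<forall>x\<in>X. \<forall>y\<in>Y. phi x y \<in> DQ m (tX x) (tY y))"

definition qrel_le :: "'a set \<Rightarrow> 'b set \<Rightarrow> ('a \<Rightarrow> 'b \<Rightarrow> 'q::complete_lattice) \<Rightarrow>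
    ('a \<Rightarrow> 'b \<Rightarrow> 'q) \<Rightarrow> bool" where
  "qrel_le X Y phi psi \<longleftrightarrow> (\<forall>x\<in>X. \<forall>y\<in>Y. phi x y \<le> psi x y)"

definition qcomp :: "('q::complete_lattice \<Rightarrow> 'q \<Rightarrow> 'q) \<Rightarrow> 'b set \<Rightarrow> ('b \<Rightarrow> 'q) \<Rightarrow>
    ('b \<Rightarrow> 'c \<Rightarrow> 'q) \<Rightarrow> ('a \<Rightarrow> 'b \<Rightarrow> 'q) \<Rightarrow> ('a \<Rightarrow> 'c \<Rightarrow> 'q)" where
  "qcomp m Y tY psi phi = (\<lambda>x z. SUP y\<in>Y. m (rdiv m (psi y z) (tY y)) (phi x y))"

definition qlift :: "('q::complete_lattice \<Rightarrow> 'q \<Rightarrow> 'q) \<Rightarrow> 'a set \<Rightarrow> ('a \<Rightarrow> 'q) \<Rightarrow>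
    'b set \<Rightarrow> ('b \<Rightarrow> 'q) \<Rightarrow> 'c set \<Rightarrow> ('c \<Rightarrow> 'q) \<Rightarrow>
    ('a \<Rightarrow> 'c \<Rightarrow> 'q) \<Rightarrow> ('a \<Rightarrow> 'b \<Rightarrow> 'q) \<Rightarrow> ('b \<Rightarrow> 'c \<Rightarrow> 'q)" where
  "qlift m X tX Y tY Z tZ xi phi =
    (SOME psi. is_qrel m Y tY Z tZ psi \<and> qrel_le X Z (qcomp m Y tY psi phi) xi \<and>
       (\<forall>psi'. is_qrel m Y tY Z tZ psi' \<and> qrel_le X Z (qcomp m Y tY psi' phi) xi
           \<longrightarrow> qrel_le Y Z psi' psi))"

definition qext :: "('q::complete_lattice \<Rightarrow> 'q \<Rightarrow> 'q) \<Rightarrow> 'a set \<Rightarrow> ('a \<Rightarrow> 'q) \<Rightarrow>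
    'b set \<Rightarrow> ('b \<Rightarrow> 'q) \<Rightarrow> 'c set \<Rightarrow> ('c \<Rightarrow> 'q) \<Rightarrow>
    ('b \<Rightarrow> 'c \<Rightarrow> 'q) \<Rightarrow> ('a \<Rightarrow> 'c \<Rightarrow> 'q) \<Rightarrow> ('a \<Rightarrow> 'b \<Rightarrow> 'q)" where
  "qext m X tX Y tY Z tZ psi xi =
    (SOME phi. is_qrel m X tX Y tY phi \<and> qrel_le X Z (qcomp m Y tY psi phi) xi \<and>
       (\<forall>phi'. is_qrel m X tX Y tY phi' \<and> qrel_le X Z (qcomp m Y tY psi phi') xi
           \<longrightarrow> qrel_le X Y phi' phi))"

definition qpreorder :: "('q::complete_lattice \<Rightarrow> 'q \<Rightarrow> 'q) \<Rightarrow> 'a set \<Rightarrow> ('a \<Rightarrow> 'q) \<Rightarrow>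
    ('a \<Rightarrow> 'a \<Rightarrow> 'q) \<Rightarrow> bool" where
  "qpreorder m X tX R \<longleftrightarrow>
     is_qrel m X tX X tX R \<and>
     qrel_le X X (\<lambda>x x'. if x = x' then tX x else bot) R \<and>
     qrel_le X X (qcomp m X tX R R) R"

definition qmono :: "'a set \<Rightarrow> ('a \<Rightarrow> 'q::complete_lattice) \<Rightarrow> ('a \<Rightarrow> 'a \<Rightarrow> 'q) \<Rightarrow>
    'b set \<Rightarrow> ('b \<Rightarrow> 'q) \<Rightarrow> ('b \<Rightarrow> 'b \<Rightarrow> 'q) \<Rightarrow> ('a \<Rightarrow> 'b) \<Rightarrow> bool" where
  "qmono X tX RX Y tY RY f \<longleftrightarrow>
     (\<forall>x\<in>X. f x \<in> Y \<and> tY (f x) = tX x \<and> (\<forall>x'\<in>X. RX x x' \<le> RY (f x) (f x')))"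

definition qgalois :: "'a set \<Rightarrow> ('a \<Rightarrow> 'q::complete_lattice) \<Rightarrow> ('a \<Rightarrow> 'a \<Rightarrow> 'q) \<Rightarrow>
    'b set \<Rightarrow> ('b \<Rightarrow> 'q) \<Rightarrow> ('b \<Rightarrow> 'b \<Rightarrow> 'q) \<Rightarrow> ('a \<Rightarrow> 'b) \<Rightarrow> ('b \<Rightarrow> 'a) \<Rightarrow> bool" where
  "qgalois A tA RA B tB RB h k \<longleftrightarrow>
     (\<forall>a\<in>A. tA a \<le> RA a (k (h a))) \<and> (\<forall>b\<in>B. tB b \<le> RB (h (k b)) b)"

text \<open>The one-point Q-subset 1_q is (UNIV :: unit set, \<lambda>_. q).
  An element of P X is a pair (mu, q) with mu a Q-relation from X to 1_q
  with mu o 1_X \<le> mu; its type is q.\<close>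

definition PS :: "('q::complete_lattice \<Rightarrow> 'q \<Rightarrow> 'q) \<Rightarrow> 'a set \<Rightarrow> ('a \<Rightarrow> 'q) \<Rightarrow>
    ('a \<Rightarrow> 'a \<Rightarrow> 'q) \<Rightarrow> (('a \<Rightarrow> unit \<Rightarrow> 'q) \<times> 'q) set" where
  "PS m X tX R = {(mu, q). is_qrel m X tX UNIV (\<lambda>_. q) mu \<and>
                          qrel_le X UNIV (qcomp m X tX mu R) mu}"

definition PS_ty :: "(('a \<Rightarrow> unit \<Rightarrow> 'q) \<times> 'q) \<Rightarrow> 'q" where
  "PS_ty P = snd P"

text \<open>1_{PX}(mu, mu') = mu' \<swarrow> mu.\<close>
definition PS_rel :: "('q::complete_lattice \<Rightarrow> 'q \<Rightarrow> 'q) \<Rightarrow> 'a set \<Rightarrow> ('a \<Rightarrow> 'q) \<Rightarrow>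
    (('a \<Rightarrow> unit \<Rightarrow> 'q) \<times> 'q) \<Rightarrow> (('a \<Rightarrow> unit \<Rightarrow> 'q) \<times> 'q) \<Rightarrow> 'q" where
  "PS_rel m X tX P P' =
     qlift m X tX UNIV (\<lambda>_. snd P) UNIV (\<lambda>_. snd P') (fst P') (fst P) () ()"

text \<open>An element of P\<dagger> X is a pair (lam, q) with lam a Q-relation from 1_q to X
  with 1_X o lam \<le> lam; its type is q.\<close>

definition PD :: "('q::complete_lattice \<Rightarrow> 'q \<Rightarrow> 'q) \<Rightarrow> 'a set \<Rightarrow> ('a \<Rightarrow> 'q) \<Rightarrow>
    ('a \<Rightarrow> 'a \<Rightarrow> 'q) \<Rightarrow> ((unit \<Rightarrow> 'a \<Rightarrow> 'q) \<times> 'q) set" where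
  "PD m X tX R = {(lam, q). is_qrel m UNIV (\<lambda>_. q) X tX lam \<and>
                           qrel_le UNIV X (qcomp m X tX R lam) lam}"

definition PD_ty :: "((unit \<Rightarrow> 'a \<Rightarrow> 'q) \<times> 'q) \<Rightarrow> 'q" where
  "PD_ty L = snd L"

text \<open>1_{P\<dagger>X}(lam, lam') = lam' \<searrow> lam.\<close>
definition PD_rel :: "('q::complete_lattice \<Rightarrow> 'q \<Rightarrow> 'q) \<Rightarrow> 'a set \<Rightarrow> ('a \<Rightarrow> 'q) \<Rightarrow>
    ((unit \<Rightarrow> 'a \<Rightarrow> 'q) \<times> 'q) \<Rightarrow> ((unit \<Rightarrow> 'a \<Rightarrow> 'q) \<times> 'q) \<Rightarrow> 'q" where
  "PD_rel m X tX L L' =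
     qext m UNIV (\<lambda>_. snd L) UNIV (\<lambda>_. snd L') X tX (fst L') (fst L) () ()"

text \<open>phi_up mu = phi \<swarrow> mu  (P X \<rightarrow> P\<dagger> Y)\<close>
definition dist_up :: "('q::complete_lattice \<Rightarrow> 'q \<Rightarrow> 'q) \<Rightarrow> 'a set \<Rightarrow> ('a \<Rightarrow> 'q) \<Rightarrow>
    'b set \<Rightarrow> ('b \<Rightarrow> 'q) \<Rightarrow> ('a \<Rightarrow> 'b \<Rightarrow> 'q) \<Rightarrow>
    (('a \<Rightarrow> unit \<Rightarrow> 'q) \<times> 'q) \<Rightarrow> ((unit \<Rightarrow> 'b \<Rightarrow> 'q) \<times> 'q)" where
  "dist_up m X tX Y tY phi P = (qlift m X tX UNIV (\<lambda>_. snd P) Y tY phi (fst P), snd P)"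

text \<open>phi_down lam' = lam' \<searrow> phi  (P\<dagger> Y \<rightarrow> P X)\<close>
definition dist_down :: "('q::complete_lattice \<Rightarrow> 'q \<Rightarrow> 'q) \<Rightarrow> 'a set \<Rightarrow> ('a \<Rightarrow> 'q) \<Rightarrow>
    'b set \<Rightarrow> ('b \<Rightarrow> 'q) \<Rightarrow> ('a \<Rightarrow> 'b \<Rightarrow> 'q) \<Rightarrow>
    ((unit \<Rightarrow> 'b \<Rightarrow> 'q) \<times> 'q) \<Rightarrow> (('a \<Rightarrow> unit \<Rightarrow> 'q) \<times> 'q)" where
  "dist_down m X tX Y tY phi L = (qext m X tX UNIV (\<lambda>_. snd L) Y tY (fst L) phi, snd L)"

text \<open>phi^* mu' = mu' o phi  (P Y \<rightarrow> P X)\<close>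
definition dist_pb :: "('q::complete_lattice \<Rightarrow> 'q \<Rightarrow> 'q) \<Rightarrow> 'a set \<Rightarrow> ('a \<Rightarrow> 'q) \<Rightarrow>
    'b set \<Rightarrow> ('b \<Rightarrow> 'q) \<Rightarrow> ('a \<Rightarrow> 'b \<Rightarrow> 'q) \<Rightarrow>
    (('b \<Rightarrow> unit \<Rightarrow> 'q) \<times> 'q) \<Rightarrow> (('a \<Rightarrow> unit \<Rightarrow> 'q) \<times> 'q)" where
  "dist_pb m X tX Y tY phi P = (qcomp m Y tY (fst P) phi, snd P)"

text \<open>phi_* mu = mu \<swarrow> phi  (P X \<rightarrow> P Y)\<close>
definition dist_pf :: "('q::complete_lattice \<Rightarrow> 'q \<Rightarrow> 'q) \<Rightarrow> 'a set \<Rightarrow> ('a \<Rightarrow> 'q) \<Rightarrow>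
    'b set \<Rightarrow> ('b \<Rightarrow> 'q) \<Rightarrow> ('a \<Rightarrow> 'b \<Rightarrow> 'q) \<Rightarrow>
    (('a \<Rightarrow> unit \<Rightarrow> 'q) \<times> 'q) \<Rightarrow> (('b \<Rightarrow> unit \<Rightarrow> 'q) \<times> 'q)" where
  "dist_pf m X tX Y tY phi P = (qlift m X tX Y tY UNIV (\<lambda>_. snd P) (fst P) phi, snd P)"

text \<open>phi_\<dagger> lam' = phi \<searrow> lam'  (P\<dagger> Y \<rightarrow> P\<dagger> X)\<close>
definition dist_dpb :: "('q::complete_lattice \<Rightarrow> 'q \<Rightarrow> 'q) \<Rightarrow> 'a set \<Rightarrow> ('a \<Rightarrow> 'q) \<Rightarrow>
    'b set \<Rightarrow> ('b \<Rightarrow> 'q) \<Rightarrow> ('a \<Rightarrow> 'b \<Rightarrow> 'q) \<Rightarrow>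
    ((unit \<Rightarrow> 'b \<Rightarrow> 'q) \<times> 'q) \<Rightarrow> ((unit \<Rightarrow> 'a \<Rightarrow> 'q) \<times> 'q)" where
  "dist_dpb m X tX Y tY phi L = (qext m UNIV (\<lambda>_. snd L) X tX Y tY phi (fst L), snd L)"

text \<open>phi^\<dagger> lam = phi o lam  (P\<dagger> X \<rightarrow> P\<dagger> Y)\<close>
definition dist_dpf :: "('q::complete_lattice \<Rightarrow> 'q \<Rightarrow> 'q) \<Rightarrow> 'a set \<Rightarrow> ('a \<Rightarrow> 'q) \<Rightarrow>
    'b set \<Rightarrow> ('b \<Rightarrow> 'q) \<Rightarrow> ('a \<Rightarrow> 'b \<Rightarrow> 'q) \<Rightarrow>
    ((unit \<Rightarrow> 'a \<Rightarrow> 'q) \<times> 'q) \<Rightarrow> ((unit \<Rightarrow> 'b \<Rightarrow> 'q) \<times> 'q)" where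
  "dist_dpf m X tX Y tY phi L = (qcomp m X tX phi (fst L), snd L)"

text \<open>Graph f_nat(x,y) = 1_Y(fx, y) (X \<rightarrow> Y); for g : Y \<rightarrow> X,
  cograph g^nat(x,y) = 1_X(x, gy) (X \<rightarrow> Y).\<close>
definition graph :: "('b \<Rightarrow> 'b \<Rightarrow> 'q) \<Rightarrow> ('a \<Rightarrow> 'b) \<Rightarrow> ('a \<Rightarrow> 'b \<Rightarrow> 'q)" where
  "graph RY f = (\<lambda>x y. RY (f x) y)"

definition cograph :: "('a \<Rightarrow> 'a \<Rightarrow> 'q) \<Rightarrow> ('b \<Rightarrow> 'a) \<Rightarrow> ('a \<Rightarrow> 'b \<Rightarrow> 'q)" where
  "cograph RX g = (\<lambda>x y. RX x (g y))"

end

theory Submission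
  imports Defs
begin



locale quant =
  fixes m :: "'q::complete_lattice \<Rightarrow> 'q \<Rightarrow> 'q" and e :: 'q
  assumes QQ: "quantale m e"
begin

lemma assoc: "m (m a b) c = m a (m b c)" using QQ unfolding quantale_def by blast
lemma unitl: "m e a = a" using QQ unfolding quantale_def by blast
lemma supr: "m a (Sup S) = (SUP s\<in>S. m a s)" using QQ unfolding quantale_def by blast
lemma supl: "m (Sup S) b = (SUP s\<in>S. m s b)" using QQ unfolding quantale_def by blast

lemma mono_l: assumes "a \<le> a'" shows "m a b \<le> m a' b"
proof -
  have "m a' b = m (Sup {a,a'}) b" using assms by (simp add: sup_absorb2)
  also have "\<dots> = sup (m a b) (m a' b)" using supl[of "{a,a'}" b] by simp
  finally show ?thesis by (simp add: le_iff_sup sup_commute)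
qed

lemma mono_r: assumes "b \<le> b'" shows "m a b \<le> m a b'"
proof -
  have "m a b' = m a (Sup {b,b'})" using assms by (simp add: sup_absorb2)
  also have "\<dots> = sup (m a b) (m a b')" using supr[of a "{b,b'}"] by simp
  finally show ?thesis by (simp add: le_iff_sup sup_commute)
qed

lemma rdiv_le: "m (rdiv m r q) q \<le> r"
  unfolding rdiv_def supl by (auto intro: SUP_least)
lemma rdiv_ge: "m p q \<le> r \<Longrightarrow> p \<le> rdiv m r q"
  unfolding rdiv_def by (auto intro: Sup_upper)
lemma rdiv_mono: "r \<le> r' \<Longrightarrow> rdiv m r q \<le> rdiv m r' q"
  by (rule rdiv_ge) (meson order_trans rdiv_le)
lemma ldiv_le: "m p (ldiv m p r) \<le> r"
  unfolding ldiv_def supr by (auto intro: SUP_least)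
lemma ldiv_ge: "m p q \<le> r \<Longrightarrow> q \<le> ldiv m p r"
  unfolding ldiv_def by (auto intro: Sup_upper)
lemma ldiv_mono: "r \<le> r' \<Longrightarrow> ldiv m p r \<le> ldiv m p r'"
  by (rule ldiv_ge) (meson order_trans ldiv_le)

lemma e_rdiv: "e \<le> rdiv m q q" by (rule rdiv_ge) (simp add: unitl)

lemma K6: assumes "q \<le> v" shows "u \<le> m (rdiv m v q) u"
proof -
  have "e \<le> rdiv m v q" using e_rdiv rdiv_mono[OF assms] order_trans by blast
  then have "m e u \<le> m (rdiv m v q) u" by (rule mono_l)
  then show ?thesis by (simp add: unitl)
qed

lemma K8: assumes "q \<le> v" "q \<le> w" shows "q \<le> m (rdiv m v q) w"
  using K6[OF assms(1), of q] mono_r[OF assms(2), of "rdiv m v q"] by simp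

lemma DQ1: "u \<in> DQ m p q \<Longrightarrow> m (rdiv m u p) p = u" by (simp add: DQ_def)
lemma DQ2: "u \<in> DQ m p q \<Longrightarrow> m q (ldiv m q u) = u" by (simp add: DQ_def)

lemma K3: assumes "u \<in> DQ m p q" "p \<le> w" shows "u \<le> m (rdiv m u p) w"
  using mono_r[OF assms(2), of "rdiv m u p"] DQ1[OF assms(1)] by simp

lemma K5: assumes "v \<in> DQ m p r" "u \<in> DQ m p0 p"
  shows "m (rdiv m v p) u = m v (ldiv m p u)"
proof -
  have "m (rdiv m v p) u = m (rdiv m v p) (m p (ldiv m p u))" using DQ2[OF assms(2)] by simp
  also have "\<dots> = m (m (rdiv m v p) p) (ldiv m p u)" by (simp add: assoc)
  also have "\<dots> = m v (ldiv m p u)" using DQ1[OF assms(1)] by simp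
  finally show ?thesis .
qed

lemma DQ_Sup: assumes "\<And>u. u \<in> S \<Longrightarrow> u \<in> DQ m p q" shows "Sup S \<in> DQ m p q"
proof -
  have 1: "m (rdiv m (Sup S) p) p = Sup S"
  proof (rule antisym)
    show "m (rdiv m (Sup S) p) p \<le> Sup S" by (rule rdiv_le)
    show "Sup S \<le> m (rdiv m (Sup S) p) p"
    proof (rule Sup_least)
      fix u assume u: "u \<in> S"
      have "u = m (rdiv m u p) p" using DQ1[OF assms[OF u]] by simp
      also have "\<dots> \<le> m (rdiv m (Sup S) p) p" by (rule mono_l, rule rdiv_mono, rule Sup_upper[OF u])
      finally show "u \<le> m (rdiv m (Sup S) p) p" .
    qed
  qed
  have 2: "Sup S = m q (ldiv m q (Sup S))"
  proof (rule antisym)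
    show "m q (ldiv m q (Sup S)) \<le> Sup S" by (rule ldiv_le)
    show "Sup S \<le> m q (ldiv m q (Sup S))"
    proof (rule Sup_least)
      fix u assume u: "u \<in> S"
      have "u = m q (ldiv m q u)" using DQ2[OF assms[OF u]] by simp
      also have "\<dots> \<le> m q (ldiv m q (Sup S))" by (rule mono_r, rule ldiv_mono, rule Sup_upper[OF u])
      finally show "u \<le> m q (ldiv m q (Sup S))" .
    qed
  qed
  show ?thesis using 1 2 by (simp add: DQ_def)
qed

lemma DQ_comp: assumes u: "u \<in> DQ m p q" and v: "v \<in> DQ m q r"
  shows "m (rdiv m v q) u \<in> DQ m p r"
proof -
  define t where "t = m (rdiv m v q) u"
  have 1: "m (rdiv m t p) p = t"
  proof (rule antisym)
    show "m (rdiv m t p) p \<le> t" by (rule rdiv_le)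
    have "t = m (m (rdiv m v q) (rdiv m u p)) p" unfolding t_def using DQ1[OF u] by (simp add: assoc)
    moreover have "m (rdiv m v q) (rdiv m u p) \<le> rdiv m t p"
      by (rule rdiv_ge) (simp add: t_def assoc DQ1[OF u])
    ultimately show "t \<le> m (rdiv m t p) p" using mono_l by metis
  qed
  have 2: "t = m r (ldiv m r t)"
  proof (rule antisym)
    show "m r (ldiv m r t) \<le> t" by (rule ldiv_le)
    have tt: "t = m v (ldiv m q u)" unfolding t_def by (rule K5[OF v u])
    then have "t = m r (m (ldiv m r v) (ldiv m q u))" using DQ2[OF v] by (metis assoc)
    moreover have "m (ldiv m r v) (ldiv m q u) \<le> ldiv m r t"
      by (rule ldiv_ge) (metis tt DQ2[OF v] assoc order_refl)
    ultimately show "t \<le> m r (ldiv m r t)" using mono_r by metis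
  qed
  show ?thesis using 1 2 unfolding DQ_def t_def by simp
qed

lemma DQ_refl: "q \<in> DQ m q q"
proof -
  have "m (rdiv m q q) q = q"
    by (rule antisym[OF rdiv_le]) (metis K6 order_refl)
  moreover have "m q (ldiv m q q) = q"
  proof (rule antisym[OF ldiv_le])
    have "e \<le> ldiv m q q" by (rule ldiv_ge) (simp add: QQ[unfolded quantale_def])
    then show "q \<le> m q (ldiv m q q)" using mono_r[of e "ldiv m q q" q] QQ[unfolded quantale_def] by simp
  qed
  ultimately show ?thesis by (simp add: DQ_def)
qed

lemma K7: assumes "u \<in> DQ m p q" shows "m (rdiv m q q) u \<le> u"
proof -
  have "m (rdiv m q q) u = m (m (rdiv m q q) q) (ldiv m q u)" using DQ2[OF assms] by (metis assoc)
  also have "\<dots> \<le> m q (ldiv m q u)" by (rule mono_l, rule rdiv_le)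
  finally show ?thesis using DQ2[OF assms] by simp
qed

end


context quant begin

lemma lift_props:
  assumes phi: "is_qrel m X tX Y tY phi"
  shows "is_qrel m Y tY Z tZ (qlift m X tX Y tY Z tZ xi phi)"
    and "\<And>x y z. x\<in>X \<Longrightarrow> y\<in>Y \<Longrightarrow> z\<in>Z \<Longrightarrow>
           m (rdiv m (qlift m X tX Y tY Z tZ xi phi y z) (tY y)) (phi x y) \<le> xi x z"
    and "\<And>y z u. y\<in>Y \<Longrightarrow> z\<in>Z \<Longrightarrow> u \<in> DQ m (tY y) (tZ z) \<Longrightarrow>
           (\<forall>x\<in>X. m (rdiv m u (tY y)) (phi x y) \<le> xi x z) \<Longrightarrow> u \<le> qlift m X tX Y tY Z tZ xi phi y z"
proof -
  define V where "V y z = {u \<in> DQ m (tY y) (tZ z). \<forall>x\<in>X. m (rdiv m u (tY y)) (phi x y) \<le> xi x z}" for y z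
  define psi0 where "psi0 y z = Sup (V y z)" for y z
  have q0: "is_qrel m Y tY Z tZ psi0" unfolding is_qrel_def psi0_def
  proof (intro ballI)
    fix y z assume "y\<in>Y" "z\<in>Z"
    show "Sup (V y z) \<in> DQ m (tY y) (tZ z)" by (rule DQ_Sup) (simp add: V_def)
  qed
  have valid0: "m (rdiv m (psi0 y z) (tY y)) (phi x y) \<le> xi x z" if "x\<in>X" "y\<in>Y" "z\<in>Z" for x y z
  proof -
    have phixy: "phi x y \<in> DQ m (tX x) (tY y)" using phi that unfolding is_qrel_def by auto
    have d: "psi0 y z \<in> DQ m (tY y) (tZ z)" using q0 that unfolding is_qrel_def by auto
    have "m (rdiv m (psi0 y z) (tY y)) (phi x y) = m (psi0 y z) (ldiv m (tY y) (phi x y))"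
      by (rule K5[OF d phixy])
    also have "\<dots> = (SUP u\<in>V y z. m u (ldiv m (tY y) (phi x y)))" by (simp add: psi0_def supl)
    also have "\<dots> \<le> xi x z"
    proof (rule SUP_least)
      fix u assume u: "u \<in> V y z"
      then have uD: "u \<in> DQ m (tY y) (tZ z)" by (simp add: V_def)
      have "m u (ldiv m (tY y) (phi x y)) = m (rdiv m u (tY y)) (phi x y)" using K5[OF uD phixy] by simp
      also have "\<dots> \<le> xi x z" using u that by (simp add: V_def)
      finally show "m u (ldiv m (tY y) (phi x y)) \<le> xi x z" .
    qed
    finally show ?thesis .
  qed
  have comp0: "qrel_le X Z (qcomp m Y tY psi0 phi) xi" unfolding qrel_le_def qcomp_def
  proof (intro ballI SUP_least)
    fix x z y assume "x\<in>X" "z\<in>Z" "y\<in>Y"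
    then show "m (rdiv m (psi0 y z) (tY y)) (phi x y) \<le> xi x z" by (simp add: valid0)
  qed
  have max0: "qrel_le Y Z psi' psi0" if a1: "is_qrel m Y tY Z tZ psi'" and a2: "qrel_le X Z (qcomp m Y tY psi' phi) xi" for psi'
    unfolding qrel_le_def psi0_def
  proof (intro ballI Sup_upper)
    fix y z assume y: "y\<in>Y" and z: "z\<in>Z"
    have "\<forall>x\<in>X. m (rdiv m (psi' y z) (tY y)) (phi x y) \<le> xi x z"
    proof
      fix x assume x: "x\<in>X"
      have "m (rdiv m (psi' y z) (tY y)) (phi x y) \<le> qcomp m Y tY psi' phi x z"
        unfolding qcomp_def using y by (rule SUP_upper)
      also have "\<dots> \<le> xi x z" using a2 x z unfolding qrel_le_def by auto
      finally show "m (rdiv m (psi' y z) (tY y)) (phi x y) \<le> xi x z" .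
    qed
    then show "psi' y z \<in> V y z" using a1 y z unfolding V_def is_qrel_def by auto
  qed
  let ?P = "\<lambda>psi. is_qrel m Y tY Z tZ psi \<and> qrel_le X Z (qcomp m Y tY psi phi) xi \<and>
       (\<forall>psi'. is_qrel m Y tY Z tZ psi' \<and> qrel_le X Z (qcomp m Y tY psi' phi) xi
           \<longrightarrow> qrel_le Y Z psi' psi)"
  have "?P psi0" using q0 comp0 max0 by blast
  then have P: "?P (qlift m X tX Y tY Z tZ xi phi)" unfolding qlift_def by (rule someI[where P="?P"])
  then show "is_qrel m Y tY Z tZ (qlift m X tX Y tY Z tZ xi phi)" by blast
  show "m (rdiv m (qlift m X tX Y tY Z tZ xi phi y z) (tY y)) (phi x y) \<le> xi x z"
    if "x\<in>X" "y\<in>Y" "z\<in>Z" for x y z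
  proof -
    have "m (rdiv m (qlift m X tX Y tY Z tZ xi phi y z) (tY y)) (phi x y)
        \<le> qcomp m Y tY (qlift m X tX Y tY Z tZ xi phi) phi x z"
      unfolding qcomp_def using that(2) by (rule SUP_upper)
    also have "\<dots> \<le> xi x z"
    proof -
      have "qrel_le X Z (qcomp m Y tY (qlift m X tX Y tY Z tZ xi phi) phi) xi" using P by blast
      then show ?thesis using that unfolding qrel_le_def by blast
    qed
    finally show ?thesis .
  qed
  show "u \<le> qlift m X tX Y tY Z tZ xi phi y z"
    if "y\<in>Y" "z\<in>Z" "u \<in> DQ m (tY y) (tZ z)" "\<forall>x\<in>X. m (rdiv m u (tY y)) (phi x y) \<le> xi x z" for y z u
  proof -
    have "u \<le> psi0 y z" unfolding psi0_def by (rule Sup_upper) (use that in \<open>simp add: V_def\<close>)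
    also have "\<dots> \<le> qlift m X tX Y tY Z tZ xi phi y z"
    proof -
      have "qrel_le Y Z psi0 (qlift m X tX Y tY Z tZ xi phi)" using P q0 comp0 by blast
      then show ?thesis using that unfolding qrel_le_def by blast
    qed
    finally show ?thesis .
  qed
qed

lemma ext_props:
  shows "is_qrel m X tX Y tY (qext m X tX Y tY Z tZ psi xi)"
    and "\<And>x y z. x\<in>X \<Longrightarrow> y\<in>Y \<Longrightarrow> z\<in>Z \<Longrightarrow>
           m (rdiv m (psi y z) (tY y)) (qext m X tX Y tY Z tZ psi xi x y) \<le> xi x z"
    and "\<And>x y u. x\<in>X \<Longrightarrow> y\<in>Y \<Longrightarrow> u \<in> DQ m (tX x) (tY y) \<Longrightarrow>
           (\<forall>z\<in>Z. m (rdiv m (psi y z) (tY y)) u \<le> xi x z) \<Longrightarrow> u \<le> qext m X tX Y tY Z tZ psi xi x y"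
proof -
  define V where "V x y = {u \<in> DQ m (tX x) (tY y). \<forall>z\<in>Z. m (rdiv m (psi y z) (tY y)) u \<le> xi x z}" for x y
  define phi0 where "phi0 x y = Sup (V x y)" for x y
  have q0: "is_qrel m X tX Y tY phi0" unfolding is_qrel_def phi0_def
  proof (intro ballI)
    fix x y assume "x\<in>X" "y\<in>Y"
    show "Sup (V x y) \<in> DQ m (tX x) (tY y)" by (rule DQ_Sup) (simp add: V_def)
  qed
  have valid0: "m (rdiv m (psi y z) (tY y)) (phi0 x y) \<le> xi x z" if "x\<in>X" "y\<in>Y" "z\<in>Z" for x y z
    unfolding phi0_def supr using that by (auto intro!: SUP_least simp: V_def)
  have comp0: "qrel_le X Z (qcomp m Y tY psi phi0) xi" unfolding qrel_le_def qcomp_def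
  proof (intro ballI SUP_least)
    fix x z y assume "x\<in>X" "z\<in>Z" "y\<in>Y"
    then show "m (rdiv m (psi y z) (tY y)) (phi0 x y) \<le> xi x z" by (simp add: valid0)
  qed
  have max0: "qrel_le X Y phi' phi0" if a1: "is_qrel m X tX Y tY phi'" and a2: "qrel_le X Z (qcomp m Y tY psi phi') xi" for phi'
    unfolding qrel_le_def phi0_def
  proof (intro ballI Sup_upper)
    fix x y assume x: "x\<in>X" and y: "y\<in>Y"
    have "\<forall>z\<in>Z. m (rdiv m (psi y z) (tY y)) (phi' x y) \<le> xi x z"
    proof
      fix z assume z: "z\<in>Z"
      have "m (rdiv m (psi y z) (tY y)) (phi' x y) \<le> qcomp m Y tY psi phi' x z"
        unfolding qcomp_def using y by (rule SUP_upper)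
      also have "\<dots> \<le> xi x z" using a2 x z unfolding qrel_le_def by auto
      finally show "m (rdiv m (psi y z) (tY y)) (phi' x y) \<le> xi x z" .
    qed
    then show "phi' x y \<in> V x y" using a1 x y unfolding V_def is_qrel_def by auto
  qed
  let ?P = "\<lambda>phi. is_qrel m X tX Y tY phi \<and> qrel_le X Z (qcomp m Y tY psi phi) xi \<and>
       (\<forall>phi'. is_qrel m X tX Y tY phi' \<and> qrel_le X Z (qcomp m Y tY psi phi') xi
           \<longrightarrow> qrel_le X Y phi' phi)"
  have "?P phi0" using q0 comp0 max0 by blast
  then have P: "?P (qext m X tX Y tY Z tZ psi xi)" unfolding qext_def by (rule someI[where P="?P"])
  then show "is_qrel m X tX Y tY (qext m X tX Y tY Z tZ psi xi)" by blast
  show "m (rdiv m (psi y z) (tY y)) (qext m X tX Y tY Z tZ psi xi x y) \<le> xi x z"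
    if "x\<in>X" "y\<in>Y" "z\<in>Z" for x y z
  proof -
    have "m (rdiv m (psi y z) (tY y)) (qext m X tX Y tY Z tZ psi xi x y)
        \<le> qcomp m Y tY psi (qext m X tX Y tY Z tZ psi xi) x z"
      unfolding qcomp_def using that(2) by (rule SUP_upper)
    also have "\<dots> \<le> xi x z"
    proof -
      have "qrel_le X Z (qcomp m Y tY psi (qext m X tX Y tY Z tZ psi xi)) xi" using P by blast
      then show ?thesis using that(1,3) unfolding qrel_le_def by blast
    qed
    finally show ?thesis .
  qed
  show "u \<le> qext m X tX Y tY Z tZ psi xi x y"
    if "x\<in>X" "y\<in>Y" "u \<in> DQ m (tX x) (tY y)" "\<forall>z\<in>Z. m (rdiv m (psi y z) (tY y)) u \<le> xi x z" for x y u
  proof -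
    have "u \<le> phi0 x y" unfolding phi0_def by (rule Sup_upper) (use that in \<open>simp add: V_def\<close>)
    also have "\<dots> \<le> qext m X tX Y tY Z tZ psi xi x y"
    proof -
      have "qrel_le X Y phi0 (qext m X tX Y tY Z tZ psi xi)" using P q0 comp0 by blast
      then show ?thesis using that unfolding qrel_le_def by blast
    qed
    finally show ?thesis .
  qed
qed

lemma qcomp_qrel: assumes "is_qrel m X tX Y tY phi" "is_qrel m Y tY Z tZ psi"
  shows "is_qrel m X tX Z tZ (qcomp m Y tY psi phi)"
  unfolding is_qrel_def qcomp_def
proof (intro ballI DQ_Sup)
  fix x z u assume x: "x\<in>X" and z: "z\<in>Z" and u: "u \<in> (\<lambda>y. m (rdiv m (psi y z) (tY y)) (phi x y)) ` Y"
  then obtain y where y: "y\<in>Y" and uu: "u = m (rdiv m (psi y z) (tY y)) (phi x y)" by blast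
  show "u \<in> DQ m (tX x) (tZ z)" unfolding uu
    by (rule DQ_comp) (use assms x y z in \<open>auto simp: is_qrel_def\<close>)
qed

lemma PSle:
  assumes "is_qrel m X tX UNIV (\<lambda>_. snd P) (fst P)" "snd P' = snd P"
  shows "snd P \<le> PS_rel m X tX P P' \<longleftrightarrow> (\<forall>x\<in>X. fst P x () \<le> fst P' x ())"
proof
  let ?q = "snd P"
  assume H: "snd P \<le> PS_rel m X tX P P'"
  show "\<forall>x\<in>X. fst P x () \<le> fst P' x ()"
  proof
    fix x assume x: "x\<in>X"
    have "fst P x () \<le> m (rdiv m (PS_rel m X tX P P') ?q) (fst P x ())" by (rule K6[OF H])
    also have "\<dots> \<le> fst P' x ()" unfolding PS_rel_def
      using lift_props(2)[OF assms(1), where Z=UNIV and tZ="\<lambda>_. snd P'" and xi="fst P'"] x by simp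
    finally show "fst P x () \<le> fst P' x ()" .
  qed
next
  assume H: "\<forall>x\<in>X. fst P x () \<le> fst P' x ()"
  show "snd P \<le> PS_rel m X tX P P'" unfolding PS_rel_def
  proof (rule lift_props(3)[OF assms(1)])
    show "snd P \<in> DQ m (snd P) (snd P')" using assms(2) DQ_refl by simp
    show "\<forall>x\<in>X. m (rdiv m (snd P) (snd P)) (fst P x ()) \<le> fst P' x ()"
    proof
      fix x assume x: "x\<in>X"
      have "fst P x () \<in> DQ m (tX x) (snd P)" using assms(1) x unfolding is_qrel_def by auto
      then have "m (rdiv m (snd P) (snd P)) (fst P x ()) \<le> fst P x ()" by (rule K7)
      then show "m (rdiv m (snd P) (snd P)) (fst P x ()) \<le> fst P' x ()" using H x order_trans by blast
    qed
  qed auto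
qed

lemma PDle:
  assumes "is_qrel m UNIV (\<lambda>_. snd L') X tX (fst L')" "snd L' = snd L"
  shows "snd L \<le> PD_rel m X tX L L' \<longleftrightarrow> (\<forall>x\<in>X. fst L' () x \<le> fst L () x)"
proof
  assume H: "snd L \<le> PD_rel m X tX L L'"
  show "\<forall>x\<in>X. fst L' () x \<le> fst L () x"
  proof
    fix x assume x: "x\<in>X"
    have d: "fst L' () x \<in> DQ m (snd L) (tX x)" using assms x unfolding is_qrel_def by auto
    have "fst L' () x \<le> m (rdiv m (fst L' () x) (snd L)) (PD_rel m X tX L L')" by (rule K3[OF d H])
    also have "\<dots> \<le> fst L () x" unfolding PD_rel_def
      using ext_props(2)[where X=UNIV and tX="\<lambda>_. snd L" and Y=UNIV and tY="\<lambda>_. snd L'" and Z=X and tZ=tX and psi="fst L'" and xi="fst L"] x assms(2)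
      by simp
    finally show "fst L' () x \<le> fst L () x" .
  qed
next
  assume H: "\<forall>x\<in>X. fst L' () x \<le> fst L () x"
  show "snd L \<le> PD_rel m X tX L L'" unfolding PD_rel_def
  proof (rule ext_props(3))
    show "snd L \<in> DQ m (snd L) (snd L')" using assms(2) DQ_refl by simp
    show "\<forall>x\<in>X. m (rdiv m (fst L' () x) (snd L')) (snd L) \<le> fst L () x"
    proof
      fix x assume x: "x\<in>X"
      have "fst L' () x \<in> DQ m (snd L') (tX x)" using assms(1) x unfolding is_qrel_def by auto
      then have "m (rdiv m (fst L' () x) (snd L')) (snd L) = fst L' () x" using DQ1 assms(2) by metis
      then show "m (rdiv m (fst L' () x) (snd L')) (snd L) \<le> fst L () x" using H x by simp
    qed
  qed auto
qed

lemma pre_q: "qpreorder m X tX R \<Longrightarrow> x\<in>X \<Longrightarrow> x'\<in>X \<Longrightarrow> R x x' \<in> DQ m (tX x) (tX x')"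
  unfolding qpreorder_def is_qrel_def by blast
lemma pre_r: "qpreorder m X tX R \<Longrightarrow> x\<in>X \<Longrightarrow> tX x \<le> R x x"
  unfolding qpreorder_def qrel_le_def by (metis (full_types))
lemma pre_t: "qpreorder m X tX R \<Longrightarrow> x\<in>X \<Longrightarrow> x'\<in>X \<Longrightarrow> x''\<in>X \<Longrightarrow>
   m (rdiv m (R x' x'') (tX x')) (R x x') \<le> R x x''"
  unfolding qpreorder_def qrel_le_def qcomp_def
  by (meson SUP_upper order_trans)

lemma rep_PS: assumes "qpreorder m X tX R" "z\<in>X" shows "((\<lambda>x _. R x z), tX z) \<in> PS m X tX R"
proof -
  have "is_qrel m X tX UNIV (\<lambda>_. tX z) (\<lambda>x _. R x z)"
    unfolding is_qrel_def using pre_q[OF assms(1) _ assms(2)] by blast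
  moreover have "qrel_le X UNIV (qcomp m X tX (\<lambda>x _. R x z) R) (\<lambda>x _. R x z)"
    unfolding qrel_le_def qcomp_def
  proof (intro ballI SUP_least)
    fix x u x' assume "x\<in>X" "x'\<in>X"
    then show "m (rdiv m (R x' z) (tX x')) (R x x') \<le> R x z" using pre_t[OF assms(1)] assms(2) by blast
  qed
  ultimately show ?thesis unfolding PS_def mem_Collect_eq prod.case by (rule conjI)
qed

lemma rep_PD: assumes "qpreorder m X tX R" "z\<in>X" shows "((\<lambda>_ x. R z x), tX z) \<in> PD m X tX R"
proof -
  have "is_qrel m UNIV (\<lambda>_. tX z) X tX (\<lambda>_ x. R z x)"
    unfolding is_qrel_def using pre_q[OF assms(1) assms(2)] by blast
  moreover have "qrel_le UNIV X (qcomp m X tX R (\<lambda>_ x. R z x)) (\<lambda>_ x. R z x)"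
    unfolding qrel_le_def qcomp_def
  proof (intro ballI SUP_least)
    fix x u x' assume "x\<in>X" "x'\<in>X"
    then show "m (rdiv m (R x' x) (tX x')) (R z x') \<le> R z x" using pre_t[OF assms(1)] assms(2) by blast
  qed
  ultimately show ?thesis unfolding PD_def mem_Collect_eq prod.case by (rule conjI)
qed

end



locale setting = quant m e
  for m :: "'q::complete_lattice \<Rightarrow> 'q \<Rightarrow> 'q" and e :: 'q +
  fixes X :: "'a set" and tX :: "'a \<Rightarrow> 'q" and RX :: "'a \<Rightarrow> 'a \<Rightarrow> 'q"
    and Y :: "'b set" and tY :: "'b \<Rightarrow> 'q" and RY :: "'b \<Rightarrow> 'b \<Rightarrow> 'q"
    and f :: "'a \<Rightarrow> 'b" and g :: "'b \<Rightarrow> 'a"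
  assumes pX: "qpreorder m X tX RX" and pY: "qpreorder m Y tY RY"
    and mf: "qmono X tX RX Y tY RY f" and mg: "qmono Y tY RY X tX RX g"
begin

lemma fY: "x\<in>X \<Longrightarrow> f x \<in> Y" using mf unfolding qmono_def by blast
lemma ft: "x\<in>X \<Longrightarrow> tY (f x) = tX x" using mf unfolding qmono_def by blast
lemma fm: "x\<in>X \<Longrightarrow> x'\<in>X \<Longrightarrow> RX x x' \<le> RY (f x) (f x')" using mf unfolding qmono_def by blast
lemma gX: "y\<in>Y \<Longrightarrow> g y \<in> X" using mg unfolding qmono_def by blast
lemma gt: "y\<in>Y \<Longrightarrow> tX (g y) = tY y" using mg unfolding qmono_def by blast
lemma gm: "y\<in>Y \<Longrightarrow> y'\<in>Y \<Longrightarrow> RY y y' \<le> RX (g y) (g y')" using mg unfolding qmono_def by blast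

lemmas Xq = pre_q[OF pX] and Xr = pre_r[OF pX] and Xt = pre_t[OF pX]
lemmas Yq = pre_q[OF pY] and Yr = pre_r[OF pY] and Yt = pre_t[OF pY]

lemma G1: "qgalois X tX RX Y tY RY f g \<Longrightarrow> x\<in>X \<Longrightarrow> tX x \<le> RX x (g (f x))"
  unfolding qgalois_def by blast
lemma G2: "qgalois X tX RX Y tY RY f g \<Longrightarrow> y\<in>Y \<Longrightarrow> tY y \<le> RY (f (g y)) y"
  unfolding qgalois_def by blast

lemma Adj1: assumes G: "qgalois X tX RX Y tY RY f g" and x: "x\<in>X" and y: "y\<in>Y"
  shows "RX x (g y) \<le> RY (f x) y"
proof -
  have gy: "g y \<in> X" using gX y .
  have "RX x (g y) \<le> RY (f x) (f (g y))" by (rule fm[OF x gy])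
  also have "\<dots> \<le> m (rdiv m (RY (f (g y)) y) (tY (f (g y)))) (RY (f x) (f (g y)))"
    by (rule K6) (use G2[OF G y] ft[OF gy] gt[OF y] in simp)
  also have "\<dots> \<le> RY (f x) y" by (rule Yt) (use fY x gy y in auto)
  finally show ?thesis .
qed

lemma Adj2: assumes G: "qgalois X tX RX Y tY RY f g" and x: "x\<in>X" and y: "y\<in>Y"
  shows "RY (f x) y \<le> RX x (g y)"
proof -
  have fx: "f x \<in> Y" using fY x .
  have "RY (f x) y \<le> RX (g (f x)) (g y)" by (rule gm[OF fx y])
  also have "\<dots> \<le> m (rdiv m (RX (g (f x)) (g y)) (tX (g (f x)))) (RX x (g (f x)))"
    by (rule K3) (use Xq[of "g (f x)" "g y"] gX[OF fx] gX[OF y] G1[OF G x] gt[OF fx] ft[OF x] in auto)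
  also have "\<dots> \<le> RX x (g y)" by (rule Xt) (use gX fx x y in auto)
  finally show ?thesis .
qed

lemma graph_qrel: "is_qrel m X tX Y tY (graph RY f)"
  unfolding is_qrel_def graph_def using Yq fY ft by fastforce
lemma cog_qrel: "is_qrel m X tX Y tY (cograph RX g)"
  unfolding is_qrel_def cograph_def using Xq gX gt by fastforce

lemma PS_qrel: "P \<in> PS m Z tZ R \<Longrightarrow> is_qrel m Z tZ UNIV (\<lambda>_. snd P) (fst P)"
  unfolding PS_def by auto
lemma PD_qrel: "L \<in> PD m Z tZ R \<Longrightarrow> is_qrel m UNIV (\<lambda>_. snd L) Z tZ (fst L)"
  unfolding PD_def by auto

end


context setting begin

lemma eq3: "qgalois X tX RX Y tY RY f g \<longleftrightarrow>
  qgalois (PS m Y tY RY) PS_ty (PS_rel m Y tY) (PS m X tX RX) PS_ty (PS_rel m X tX)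
            (dist_pb m X tX Y tY (graph RY f)) (dist_pf m X tX Y tY (cograph RX g))"
proof
  assume G: "qgalois X tX RX Y tY RY f g"
  show "qgalois (PS m Y tY RY) PS_ty (PS_rel m Y tY) (PS m X tX RX) PS_ty (PS_rel m X tX)
            (dist_pb m X tX Y tY (graph RY f)) (dist_pf m X tX Y tY (cograph RX g))"
    unfolding qgalois_def
  proof (intro conjI ballI)
    fix a assume a: "a \<in> PS m Y tY RY"
    let ?k = "dist_pf m X tX Y tY (cograph RX g) (dist_pb m X tX Y tY (graph RY f) a)"
    let ?\<kappa> = "qlift m X tX Y tY UNIV (\<lambda>_. snd a) (qcomp m Y tY (fst a) (graph RY f)) (cograph RX g)"
    have fk: "fst ?k = ?\<kappa>" "snd ?k = snd a" by (simp_all add: dist_pf_def dist_pb_def)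
    have aq: "is_qrel m Y tY UNIV (\<lambda>_. snd a) (fst a)" by (rule PS_qrel[OF a])
    have iff: "snd a \<le> PS_rel m Y tY a ?k \<longleftrightarrow> (\<forall>y\<in>Y. fst a y () \<le> fst ?k y ())"
      by (rule PSle[OF aq]) (simp add: fk)
    have "\<forall>y\<in>Y. fst a y () \<le> ?\<kappa> y ()"
    proof
      fix y assume y: "y\<in>Y"
      show "fst a y () \<le> ?\<kappa> y ()"
      proof (rule lift_props(3)[OF cog_qrel])
        show "fst a y () \<in> DQ m (tY y) (snd a)" using aq y unfolding is_qrel_def by auto
        show "\<forall>x\<in>X. m (rdiv m (fst a y ()) (tY y)) (cograph RX g x y) \<le> qcomp m Y tY (fst a) (graph RY f) x ()"
        proof
          fix x assume x: "x\<in>X"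
          have "m (rdiv m (fst a y ()) (tY y)) (cograph RX g x y) \<le> m (rdiv m (fst a y ()) (tY y)) (graph RY f x y)"
            unfolding cograph_def graph_def by (rule mono_r, rule Adj1[OF G x y])
          also have "\<dots> \<le> qcomp m Y tY (fst a) (graph RY f) x ()" unfolding qcomp_def using y by (rule SUP_upper)
          finally show "m (rdiv m (fst a y ()) (tY y)) (cograph RX g x y) \<le> qcomp m Y tY (fst a) (graph RY f) x ()" .
        qed
      qed (use y in auto)
    qed
    then show "PS_ty a \<le> PS_rel m Y tY a ?k" using iff fk unfolding PS_ty_def by simp
  next
    fix b assume b: "b \<in> PS m X tX RX"
    let ?hk = "dist_pb m X tX Y tY (graph RY f) (dist_pf m X tX Y tY (cograph RX g) b)"
    let ?\<kappa> = "qlift m X tX Y tY UNIV (\<lambda>_. snd b) (fst b) (cograph RX g)"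
    have fhk: "fst ?hk = qcomp m Y tY ?\<kappa> (graph RY f)" "snd ?hk = snd b" by (simp_all add: dist_pf_def dist_pb_def)
    have hkq: "is_qrel m X tX UNIV (\<lambda>_. snd ?hk) (fst ?hk)"
      unfolding fhk by (rule qcomp_qrel[OF graph_qrel lift_props(1)[OF cog_qrel]])
    have iff: "snd ?hk \<le> PS_rel m X tX ?hk b \<longleftrightarrow> (\<forall>x\<in>X. fst ?hk x () \<le> fst b x ())"
      by (rule PSle[OF hkq]) (simp add: fhk)
    have "\<forall>x\<in>X. fst ?hk x () \<le> fst b x ()"
    proof
      fix x assume x: "x\<in>X"
      show "fst ?hk x () \<le> fst b x ()" unfolding fhk qcomp_def
      proof (rule SUP_least)
        fix y assume y: "y\<in>Y"
        have "m (rdiv m (?\<kappa> y ()) (tY y)) (graph RY f x y) \<le> m (rdiv m (?\<kappa> y ()) (tY y)) (cograph RX g x y)"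
          unfolding graph_def cograph_def by (rule mono_r, rule Adj2[OF G x y])
        also have "\<dots> \<le> fst b x ()" by (rule lift_props(2)[OF cog_qrel]) (use x y in auto)
        finally show "m (rdiv m (?\<kappa> y ()) (tY y)) (graph RY f x y) \<le> fst b x ()" .
      qed
    qed
    then show "PS_ty b \<le> PS_rel m X tX ?hk b" using iff fhk unfolding PS_ty_def by simp
  qed
next
  assume H: "qgalois (PS m Y tY RY) PS_ty (PS_rel m Y tY) (PS m X tX RX) PS_ty (PS_rel m X tX)
            (dist_pb m X tX Y tY (graph RY f)) (dist_pf m X tX Y tY (cograph RX g))"
  show "qgalois X tX RX Y tY RY f g" unfolding qgalois_def
  proof (intro conjI ballI)
    fix x0 assume x0: "x0\<in>X"
    have fx0: "f x0 \<in> Y" using fY x0 .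
    have gfx0: "g (f x0) \<in> X" using gX fx0 .
    have tt: "tX (g (f x0)) = tX x0" using gt[OF fx0] ft[OF x0] by simp
    define b where "b = ((\<lambda>x (_::unit). RX x (g (f x0))), tX (g (f x0)))"
    have bP: "b \<in> PS m X tX RX" unfolding b_def by (rule rep_PS[OF pX gfx0])
    let ?\<kappa> = "qlift m X tX Y tY UNIV (\<lambda>_. tX (g (f x0))) (\<lambda>x _. RX x (g (f x0))) (cograph RX g)"
    let ?hk = "dist_pb m X tX Y tY (graph RY f) (dist_pf m X tX Y tY (cograph RX g) b)"
    have fhk: "fst ?hk = qcomp m Y tY ?\<kappa> (graph RY f)" "snd ?hk = snd b"
      by (simp_all add: b_def dist_pf_def dist_pb_def)
    have \<kappa>q: "is_qrel m Y tY UNIV (\<lambda>_. tX (g (f x0))) ?\<kappa>" by (rule lift_props(1)[OF cog_qrel])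
    have hkq: "is_qrel m X tX UNIV (\<lambda>_. snd ?hk) (fst ?hk)"
      unfolding fhk by (simp add: b_def) (rule qcomp_qrel[OF graph_qrel \<kappa>q])
    have "PS_ty b \<le> PS_rel m X tX ?hk b" using H bP unfolding qgalois_def by blast
    then have le: "\<forall>x\<in>X. fst ?hk x () \<le> fst b x ()" using PSle[OF hkq] fhk unfolding PS_ty_def by simp
    have s1: "tX x0 \<le> RX (g (f x0)) (g (f x0))" using Xr[OF gfx0] tt by simp
    have s2: "RX (g (f x0)) (g (f x0)) \<le> ?\<kappa> (f x0) ()"
    proof (rule lift_props(3)[OF cog_qrel])
      show "RX (g (f x0)) (g (f x0)) \<in> DQ m (tY (f x0)) (tX (g (f x0)))"
        using Xq[OF gfx0 gfx0] ft[OF x0] tt by simp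
      show "\<forall>x\<in>X. m (rdiv m (RX (g (f x0)) (g (f x0))) (tY (f x0))) (cograph RX g x (f x0)) \<le> RX x (g (f x0))"
        unfolding cograph_def using Xt gfx0 ft[OF x0] tt by metis
    qed (use fx0 in auto)
    have s3: "?\<kappa> (f x0) () \<le> m (rdiv m (?\<kappa> (f x0) ()) (tY (f x0))) (graph RY f x0 (f x0))"
      unfolding graph_def by (rule K3) (use \<kappa>q Yr fx0 in \<open>auto simp: is_qrel_def\<close>)
    have s4: "m (rdiv m (?\<kappa> (f x0) ()) (tY (f x0))) (graph RY f x0 (f x0)) \<le> fst ?hk x0 ()"
      unfolding fhk qcomp_def using fx0 by (rule SUP_upper)
    have s5: "fst ?hk x0 () \<le> RX x0 (g (f x0))" using le x0 by (simp add: b_def)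
    show "tX x0 \<le> RX x0 (g (f x0))" using s1 s2 s3 s4 s5 order_trans by meson
  next
    fix y0 assume y0: "y0\<in>Y"
    have gy0: "g y0 \<in> X" using gX y0 .
    define a where "a = ((\<lambda>y (_::unit). RY y y0), tY y0)"
    have aP: "a \<in> PS m Y tY RY" unfolding a_def by (rule rep_PS[OF pY y0])
    let ?\<kappa> = "qlift m X tX Y tY UNIV (\<lambda>_. tY y0) (qcomp m Y tY (\<lambda>y _. RY y y0) (graph RY f)) (cograph RX g)"
    let ?k = "dist_pf m X tX Y tY (cograph RX g) (dist_pb m X tX Y tY (graph RY f) a)"
    have fk: "fst ?k = ?\<kappa>" "snd ?k = snd a" by (simp_all add: a_def dist_pf_def dist_pb_def)
    have "PS_ty a \<le> PS_rel m Y tY a ?k" using H aP unfolding qgalois_def by blast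
    then have le: "\<forall>y\<in>Y. RY y y0 \<le> ?\<kappa> y ()" using PSle[OF PS_qrel[OF aP]] fk unfolding PS_ty_def
      by (simp add: a_def)
    have t1: "tY y0 \<le> ?\<kappa> y0 ()" using le y0 Yr[OF y0] order_trans by blast
    have t2: "tY y0 \<le> RX (g y0) (g y0)" using Xr[OF gy0] gt[OF y0] by simp
    have t3: "m (rdiv m (?\<kappa> y0 ()) (tY y0)) (cograph RX g (g y0) y0)
        \<le> qcomp m Y tY (\<lambda>y _. RY y y0) (graph RY f) (g y0) ()"
      by (rule lift_props(2)[OF cog_qrel]) (use gy0 y0 in auto)
    have t4: "qcomp m Y tY (\<lambda>y _. RY y y0) (graph RY f) (g y0) () \<le> RY (f (g y0)) y0"
      unfolding qcomp_def graph_def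
    proof (rule SUP_least)
      fix y assume y: "y\<in>Y"
      show "m (rdiv m (RY y y0) (tY y)) (RY (f (g y0)) y) \<le> RY (f (g y0)) y0"
        by (rule Yt) (use fY gy0 y y0 in auto)
    qed
    have "tY y0 \<le> m (rdiv m (?\<kappa> y0 ()) (tY y0)) (cograph RX g (g y0) y0)"
      using K8[OF t1 t2] by (simp only: cograph_def)
    then show "tY y0 \<le> RY (f (g y0)) y0" using t3 t4 order_trans by meson
  qed
qed

end


context setting begin

lemma eq4: "qgalois X tX RX Y tY RY f g \<longleftrightarrow>
  qgalois (PD m Y tY RY) PD_ty (PD_rel m Y tY) (PD m X tX RX) PD_ty (PD_rel m X tX)
            (dist_dpb m X tX Y tY (graph RY f)) (dist_dpf m X tX Y tY (cograph RX g))"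
proof
  assume G: "qgalois X tX RX Y tY RY f g"
  show "qgalois (PD m Y tY RY) PD_ty (PD_rel m Y tY) (PD m X tX RX) PD_ty (PD_rel m X tX)
            (dist_dpb m X tX Y tY (graph RY f)) (dist_dpf m X tX Y tY (cograph RX g))"
    unfolding qgalois_def
  proof (intro conjI ballI)
    fix a assume a: "a \<in> PD m Y tY RY"
    let ?k = "dist_dpf m X tX Y tY (cograph RX g) (dist_dpb m X tX Y tY (graph RY f) a)"
    let ?\<phi> = "qext m UNIV (\<lambda>_. snd a) X tX Y tY (graph RY f) (fst a)"
    have fk: "fst ?k = qcomp m X tX (cograph RX g) ?\<phi>" "snd ?k = snd a" by (simp_all add: dist_dpf_def dist_dpb_def)
    have kq: "is_qrel m UNIV (\<lambda>_. snd ?k) Y tY (fst ?k)"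
      unfolding fk by (rule qcomp_qrel[OF ext_props(1) cog_qrel])
    have iff: "snd a \<le> PD_rel m Y tY a ?k \<longleftrightarrow> (\<forall>y\<in>Y. fst ?k () y \<le> fst a () y)"
      by (rule PDle[OF kq]) (simp add: fk)
    have "\<forall>y\<in>Y. fst ?k () y \<le> fst a () y"
    proof
      fix y assume y: "y\<in>Y"
      show "fst ?k () y \<le> fst a () y" unfolding fk qcomp_def
      proof (rule SUP_least)
        fix x assume x: "x\<in>X"
        have "m (rdiv m (cograph RX g x y) (tX x)) (?\<phi> () x) \<le> m (rdiv m (graph RY f x y) (tX x)) (?\<phi> () x)"
          unfolding cograph_def graph_def by (rule mono_l, rule rdiv_mono, rule Adj1[OF G x y])
        also have "\<dots> \<le> fst a () y" by (rule ext_props(2)) (use x y in auto)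
        finally show "m (rdiv m (cograph RX g x y) (tX x)) (?\<phi> () x) \<le> fst a () y" .
      qed
    qed
    then show "PD_ty a \<le> PD_rel m Y tY a ?k" using iff unfolding PD_ty_def by simp
  next
    fix b assume b: "b \<in> PD m X tX RX"
    let ?hk = "dist_dpb m X tX Y tY (graph RY f) (dist_dpf m X tX Y tY (cograph RX g) b)"
    let ?\<phi> = "qext m UNIV (\<lambda>_. snd b) X tX Y tY (graph RY f) (qcomp m X tX (cograph RX g) (fst b))"
    have fhk: "fst ?hk = ?\<phi>" "snd ?hk = snd b" by (simp_all add: dist_dpf_def dist_dpb_def)
    have bq: "is_qrel m UNIV (\<lambda>_. snd b) X tX (fst b)" by (rule PD_qrel[OF b])
    have iff: "snd ?hk \<le> PD_rel m X tX ?hk b \<longleftrightarrow> (\<forall>x\<in>X. fst b () x \<le> fst ?hk () x)"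
      by (rule PDle[OF bq]) (simp add: fhk)
    have "\<forall>x\<in>X. fst b () x \<le> ?\<phi> () x"
    proof
      fix x assume x: "x\<in>X"
      show "fst b () x \<le> ?\<phi> () x"
      proof (rule ext_props(3))
        show "fst b () x \<in> DQ m (snd b) (tX x)" using bq x unfolding is_qrel_def by auto
        show "\<forall>z\<in>Y. m (rdiv m (graph RY f x z) (tX x)) (fst b () x) \<le> qcomp m X tX (cograph RX g) (fst b) () z"
        proof
          fix z assume z: "z\<in>Y"
          have "m (rdiv m (graph RY f x z) (tX x)) (fst b () x) \<le> m (rdiv m (cograph RX g x z) (tX x)) (fst b () x)"
            unfolding cograph_def graph_def by (rule mono_l, rule rdiv_mono, rule Adj2[OF G x z])
          also have "\<dots> \<le> qcomp m X tX (cograph RX g) (fst b) () z" unfolding qcomp_def using x by (rule SUP_upper)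
          finally show "m (rdiv m (graph RY f x z) (tX x)) (fst b () x) \<le> qcomp m X tX (cograph RX g) (fst b) () z" .
        qed
      qed (use x in auto)
    qed
    then show "PD_ty b \<le> PD_rel m X tX ?hk b" using iff fhk unfolding PD_ty_def by simp
  qed
next
  assume H: "qgalois (PD m Y tY RY) PD_ty (PD_rel m Y tY) (PD m X tX RX) PD_ty (PD_rel m X tX)
            (dist_dpb m X tX Y tY (graph RY f)) (dist_dpf m X tX Y tY (cograph RX g))"
  show "qgalois X tX RX Y tY RY f g" unfolding qgalois_def
  proof (intro conjI ballI)
    fix x0 assume x0: "x0\<in>X"
    have fx0: "f x0 \<in> Y" using fY x0 .
    define b where "b = ((\<lambda>(_::unit) x. RX x0 x), tX x0)"
    have bP: "b \<in> PD m X tX RX" unfolding b_def by (rule rep_PD[OF pX x0])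
    let ?\<phi> = "qext m UNIV (\<lambda>_. tX x0) X tX Y tY (graph RY f) (qcomp m X tX (cograph RX g) (\<lambda>_ x. RX x0 x))"
    let ?hk = "dist_dpb m X tX Y tY (graph RY f) (dist_dpf m X tX Y tY (cograph RX g) b)"
    have fhk: "fst ?hk = ?\<phi>" "snd ?hk = snd b" by (simp_all add: b_def dist_dpf_def dist_dpb_def)
    have "PD_ty b \<le> PD_rel m X tX ?hk b" using H bP unfolding qgalois_def by blast
    moreover have "snd ?hk \<le> PD_rel m X tX ?hk b \<longleftrightarrow> (\<forall>x\<in>X. fst b () x \<le> fst ?hk () x)"
      by (rule PDle[OF PD_qrel[OF bP]]) (simp add: fhk)
    ultimately have le: "\<forall>x\<in>X. RX x0 x \<le> ?\<phi> () x" using fhk unfolding PD_ty_def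
      by (simp add: b_def)
    have s1: "m (rdiv m (graph RY f x0 (f x0)) (tX x0)) (?\<phi> () x0)
        \<le> qcomp m X tX (cograph RX g) (\<lambda>_ x. RX x0 x) () (f x0)"
      by (rule ext_props(2)) (use x0 fx0 in auto)
    have s2: "qcomp m X tX (cograph RX g) (\<lambda>_ x. RX x0 x) () (f x0) \<le> RX x0 (g (f x0))"
      unfolding qcomp_def cograph_def
    proof (rule SUP_least)
      fix x assume x: "x\<in>X"
      show "m (rdiv m (RX x (g (f x0))) (tX x)) (RX x0 x) \<le> RX x0 (g (f x0))"
        by (rule Xt) (use x0 x gX fx0 in auto)
    qed
    have t1: "tX x0 \<le> graph RY f x0 (f x0)" unfolding graph_def using Yr[OF fx0] ft[OF x0] by simp
    have t2: "tX x0 \<le> ?\<phi> () x0" using le x0 Xr[OF x0] order_trans by blast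
    show "tX x0 \<le> RX x0 (g (f x0))" using K8[OF t1 t2] s1 s2 order_trans by meson
  next
    fix y0 assume y0: "y0\<in>Y"
    have gy0: "g y0 \<in> X" using gX y0 .
    have fgy0: "f (g y0) \<in> Y" using fY gy0 .
    have tt: "tY (f (g y0)) = tY y0" "tX (g y0) = tY y0" using ft[OF gy0] gt[OF y0] by simp_all
    define a where "a = ((\<lambda>(_::unit) y. RY (f (g y0)) y), tY (f (g y0)))"
    have aP: "a \<in> PD m Y tY RY" unfolding a_def by (rule rep_PD[OF pY fgy0])
    let ?\<phi> = "qext m UNIV (\<lambda>_. tY (f (g y0))) X tX Y tY (graph RY f) (\<lambda>_ y. RY (f (g y0)) y)"
    let ?k = "dist_dpf m X tX Y tY (cograph RX g) (dist_dpb m X tX Y tY (graph RY f) a)"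
    have fk: "fst ?k = qcomp m X tX (cograph RX g) ?\<phi>" "snd ?k = snd a" by (simp_all add: a_def dist_dpf_def dist_dpb_def)
    have kq: "is_qrel m UNIV (\<lambda>_. snd ?k) Y tY (fst ?k)"
      unfolding fk by (simp add: a_def) (rule qcomp_qrel[OF ext_props(1) cog_qrel])
    have "PD_ty a \<le> PD_rel m Y tY a ?k" using H aP unfolding qgalois_def by blast
    moreover have "snd a \<le> PD_rel m Y tY a ?k \<longleftrightarrow> (\<forall>y\<in>Y. fst ?k () y \<le> fst a () y)"
      by (rule PDle[OF kq]) (simp add: fk)
    ultimately have le: "\<forall>y\<in>Y. fst ?k () y \<le> RY (f (g y0)) y" unfolding PD_ty_def
      by (simp add: a_def)
    have s1: "tY y0 \<le> RY (f (g y0)) (f (g y0))" using Yr[OF fgy0] tt by simp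
    have s2: "RY (f (g y0)) (f (g y0)) \<le> ?\<phi> () (g y0)"
    proof (rule ext_props(3))
      show "RY (f (g y0)) (f (g y0)) \<in> DQ m (tY (f (g y0))) (tX (g y0))" using Yq[OF fgy0 fgy0] tt by simp
      show "\<forall>z\<in>Y. m (rdiv m (graph RY f (g y0) z) (tX (g y0))) (RY (f (g y0)) (f (g y0))) \<le> RY (f (g y0)) z"
        unfolding graph_def using Yt fgy0 tt by metis
    qed (use gy0 in auto)
    have s3: "?\<phi> () (g y0) \<le> m (rdiv m (cograph RX g (g y0) y0) (tX (g y0))) (?\<phi> () (g y0))"
      unfolding cograph_def by (rule K6) (use Xr[OF gy0] in auto)
    have s4: "m (rdiv m (cograph RX g (g y0) y0) (tX (g y0))) (?\<phi> () (g y0)) \<le> fst ?k () y0"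
      unfolding fk qcomp_def using gy0 by (rule SUP_upper)
    have s5: "fst ?k () y0 \<le> RY (f (g y0)) y0" using le y0 by blast
    show "tY y0 \<le> RY (f (g y0)) y0" using s1 s2 s3 s4 s5 order_trans by meson
  qed
qed

lemma eq2: "qgalois X tX RX Y tY RY f g \<longleftrightarrow>
  qgalois (PS m X tX RX) PS_ty (PS_rel m X tX) (PD m Y tY RY) PD_ty (PD_rel m Y tY)
            (dist_up m X tX Y tY (graph RY f)) (dist_down m X tX Y tY (cograph RX g))"
proof
  assume G: "qgalois X tX RX Y tY RY f g"
  show "qgalois (PS m X tX RX) PS_ty (PS_rel m X tX) (PD m Y tY RY) PD_ty (PD_rel m Y tY)
            (dist_up m X tX Y tY (graph RY f)) (dist_down m X tX Y tY (cograph RX g))"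
    unfolding qgalois_def
  proof (intro conjI ballI)
    fix a assume a: "a \<in> PS m X tX RX"
    have aq: "is_qrel m X tX UNIV (\<lambda>_. snd a) (fst a)" by (rule PS_qrel[OF a])
    let ?\<psi> = "qlift m X tX UNIV (\<lambda>_. snd a) Y tY (graph RY f) (fst a)"
    let ?\<phi> = "qext m X tX UNIV (\<lambda>_. snd a) Y tY ?\<psi> (cograph RX g)"
    let ?k = "dist_down m X tX Y tY (cograph RX g) (dist_up m X tX Y tY (graph RY f) a)"
    have fk: "fst ?k = ?\<phi>" "snd ?k = snd a" by (simp_all add: dist_up_def dist_down_def)
    have iff: "snd a \<le> PS_rel m X tX a ?k \<longleftrightarrow> (\<forall>x\<in>X. fst a x () \<le> fst ?k x ())"
      by (rule PSle[OF aq]) (simp add: fk)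
    have "\<forall>x\<in>X. fst a x () \<le> ?\<phi> x ()"
    proof
      fix x assume x: "x\<in>X"
      show "fst a x () \<le> ?\<phi> x ()"
      proof (rule ext_props(3))
        show "fst a x () \<in> DQ m (tX x) (snd a)" using aq x unfolding is_qrel_def by auto
        show "\<forall>z\<in>Y. m (rdiv m (?\<psi> () z) (snd a)) (fst a x ()) \<le> cograph RX g x z"
        proof
          fix z assume z: "z\<in>Y"
          have "m (rdiv m (?\<psi> () z) (snd a)) (fst a x ()) \<le> graph RY f x z"
            using lift_props(2)[OF aq, where Z=Y and tZ=tY and xi="graph RY f"] x z by simp
          also have "\<dots> \<le> cograph RX g x z" unfolding graph_def cograph_def by (rule Adj2[OF G x z])
          finally show "m (rdiv m (?\<psi> () z) (snd a)) (fst a x ()) \<le> cograph RX g x z" .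
        qed
      qed (use x in auto)
    qed
    then show "PS_ty a \<le> PS_rel m X tX a ?k" using iff fk unfolding PS_ty_def by simp
  next
    fix b assume b: "b \<in> PD m Y tY RY"
    have bq: "is_qrel m UNIV (\<lambda>_. snd b) Y tY (fst b)" by (rule PD_qrel[OF b])
    let ?\<phi> = "qext m X tX UNIV (\<lambda>_. snd b) Y tY (fst b) (cograph RX g)"
    let ?\<psi> = "qlift m X tX UNIV (\<lambda>_. snd b) Y tY (graph RY f) ?\<phi>"
    let ?hk = "dist_up m X tX Y tY (graph RY f) (dist_down m X tX Y tY (cograph RX g) b)"
    have fhk: "fst ?hk = ?\<psi>" "snd ?hk = snd b" by (simp_all add: dist_up_def dist_down_def)
    have \<phi>q: "is_qrel m X tX UNIV (\<lambda>_. snd b) ?\<phi>" by (rule ext_props(1))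
    have iff: "snd ?hk \<le> PD_rel m Y tY ?hk b \<longleftrightarrow> (\<forall>y\<in>Y. fst b () y \<le> fst ?hk () y)"
      by (rule PDle[OF bq]) (simp add: fhk)
    have "\<forall>y\<in>Y. fst b () y \<le> ?\<psi> () y"
    proof
      fix y assume y: "y\<in>Y"
      show "fst b () y \<le> ?\<psi> () y"
      proof (rule lift_props(3)[OF \<phi>q])
        show "fst b () y \<in> DQ m (snd b) (tY y)" using bq y unfolding is_qrel_def by auto
        show "\<forall>x\<in>X. m (rdiv m (fst b () y) (snd b)) (?\<phi> x ()) \<le> graph RY f x y"
        proof
          fix x assume x: "x\<in>X"
          have "m (rdiv m (fst b () y) (snd b)) (?\<phi> x ()) \<le> cograph RX g x y"
            using ext_props(2)[where X=X and tX=tX and Y=UNIV and tY="\<lambda>_. snd b" and Z=Y and tZ=tY and psi="fst b" and xi="cograph RX g"] x y by simp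
          also have "\<dots> \<le> graph RY f x y" unfolding graph_def cograph_def by (rule Adj1[OF G x y])
          finally show "m (rdiv m (fst b () y) (snd b)) (?\<phi> x ()) \<le> graph RY f x y" .
        qed
      qed (use y in auto)
    qed
    then show "PD_ty b \<le> PD_rel m Y tY ?hk b" using iff fhk unfolding PD_ty_def by simp
  qed
next
  assume H: "qgalois (PS m X tX RX) PS_ty (PS_rel m X tX) (PD m Y tY RY) PD_ty (PD_rel m Y tY)
            (dist_up m X tX Y tY (graph RY f)) (dist_down m X tX Y tY (cograph RX g))"
  show "qgalois X tX RX Y tY RY f g" unfolding qgalois_def
  proof (intro conjI ballI)
    fix x0 assume x0: "x0\<in>X"
    have fx0: "f x0 \<in> Y" using fY x0 .
    define a where "a = ((\<lambda>x (_::unit). RX x x0), tX x0)"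
    have aP: "a \<in> PS m X tX RX" unfolding a_def by (rule rep_PS[OF pX x0])
    have aq: "is_qrel m X tX UNIV (\<lambda>_. tX x0) (\<lambda>x (_::unit). RX x x0)" using PS_qrel[OF aP] by (simp add: a_def)
    let ?\<psi> = "qlift m X tX UNIV (\<lambda>_. tX x0) Y tY (graph RY f) (\<lambda>x _. RX x x0)"
    let ?\<phi> = "qext m X tX UNIV (\<lambda>_. tX x0) Y tY ?\<psi> (cograph RX g)"
    let ?k = "dist_down m X tX Y tY (cograph RX g) (dist_up m X tX Y tY (graph RY f) a)"
    have fk: "fst ?k = ?\<phi>" "snd ?k = snd a" by (simp_all add: a_def dist_up_def dist_down_def)
    have "PS_ty a \<le> PS_rel m X tX a ?k" using H aP unfolding qgalois_def by blast
    moreover have "snd a \<le> PS_rel m X tX a ?k \<longleftrightarrow> (\<forall>x\<in>X. fst a x () \<le> fst ?k x ())"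
      by (rule PSle[OF PS_qrel[OF aP]]) (simp add: fk)
    ultimately have le: "\<forall>x\<in>X. RX x x0 \<le> ?\<phi> x ()" using fk unfolding PS_ty_def
      by (simp add: a_def)
    have s1: "m (rdiv m (?\<psi> () (f x0)) (tX x0)) (?\<phi> x0 ()) \<le> cograph RX g x0 (f x0)"
      using ext_props(2)[where X=X and tX=tX and Y=UNIV and tY="\<lambda>_. tX x0" and Z=Y and tZ=tY and psi="?\<psi>" and xi="cograph RX g"] x0 fx0 by simp
    have t1: "tX x0 \<le> ?\<psi> () (f x0)"
    proof -
      have "RY (f x0) (f x0) \<le> ?\<psi> () (f x0)"
      proof (rule lift_props(3)[OF aq])
        show "RY (f x0) (f x0) \<in> DQ m (tX x0) (tY (f x0))" using Yq[OF fx0 fx0] ft[OF x0] by simp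
        show "\<forall>x\<in>X. m (rdiv m (RY (f x0) (f x0)) (tX x0)) (RX x x0) \<le> graph RY f x (f x0)"
        proof
          fix x assume x: "x\<in>X"
          have "m (rdiv m (RY (f x0) (f x0)) (tX x0)) (RX x x0) \<le> m (rdiv m (RY (f x0) (f x0)) (tY (f x0))) (RY (f x) (f x0))"
            using mono_r[OF fm[OF x x0]] ft[OF x0] by simp
          also have "\<dots> \<le> RY (f x) (f x0)" by (rule Yt) (use fY x fx0 in auto)
          finally show "m (rdiv m (RY (f x0) (f x0)) (tX x0)) (RX x x0) \<le> graph RY f x (f x0)"
            unfolding graph_def .
        qed
      qed (use fx0 in auto)
      moreover have "tX x0 \<le> RY (f x0) (f x0)" using Yr[OF fx0] ft[OF x0] by simp
      ultimately show ?thesis by (rule order_trans[rotated])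
    qed
    have t2: "tX x0 \<le> ?\<phi> x0 ()" using le x0 Xr[OF x0] order_trans by blast
    show "tX x0 \<le> RX x0 (g (f x0))" using K8[OF t1 t2] s1 order_trans unfolding cograph_def by meson
  next
    fix y0 assume y0: "y0\<in>Y"
    have gy0: "g y0 \<in> X" using gX y0 .
    define b where "b = ((\<lambda>(_::unit) y. RY y0 y), tY y0)"
    have bP: "b \<in> PD m Y tY RY" unfolding b_def by (rule rep_PD[OF pY y0])
    let ?\<phi> = "qext m X tX UNIV (\<lambda>_. tY y0) Y tY (\<lambda>_ y. RY y0 y) (cograph RX g)"
    let ?\<psi> = "qlift m X tX UNIV (\<lambda>_. tY y0) Y tY (graph RY f) ?\<phi>"
    let ?hk = "dist_up m X tX Y tY (graph RY f) (dist_down m X tX Y tY (cograph RX g) b)"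
    have fhk: "fst ?hk = ?\<psi>" "snd ?hk = snd b" by (simp_all add: b_def dist_up_def dist_down_def)
    have \<phi>q: "is_qrel m X tX UNIV (\<lambda>_. tY y0) ?\<phi>" by (rule ext_props(1))
    have "PD_ty b \<le> PD_rel m Y tY ?hk b" using H bP unfolding qgalois_def by blast
    moreover have "snd ?hk \<le> PD_rel m Y tY ?hk b \<longleftrightarrow> (\<forall>y\<in>Y. fst b () y \<le> fst ?hk () y)"
      by (rule PDle[OF PD_qrel[OF bP]]) (simp add: fhk)
    ultimately have le: "\<forall>y\<in>Y. RY y0 y \<le> ?\<psi> () y" using fhk unfolding PD_ty_def
      by (simp add: b_def)
    have s1: "m (rdiv m (?\<psi> () y0) (tY y0)) (?\<phi> (g y0) ()) \<le> graph RY f (g y0) y0"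
      using lift_props(2)[OF \<phi>q, where Z=Y and tZ=tY and xi="graph RY f"] gy0 y0 by simp
    have t1: "tY y0 \<le> ?\<psi> () y0" using le y0 Yr[OF y0] order_trans by blast
    have t2: "tY y0 \<le> ?\<phi> (g y0) ()"
    proof -
      have "RX (g y0) (g y0) \<le> ?\<phi> (g y0) ()"
      proof (rule ext_props(3))
        show "RX (g y0) (g y0) \<in> DQ m (tX (g y0)) (tY y0)" using Xq[OF gy0 gy0] gt[OF y0] by simp
        show "\<forall>z\<in>Y. m (rdiv m (RY y0 z) (tY y0)) (RX (g y0) (g y0)) \<le> cograph RX g (g y0) z"
        proof
          fix z assume z: "z\<in>Y"
          have "m (rdiv m (RY y0 z) (tY y0)) (RX (g y0) (g y0)) \<le> m (rdiv m (RX (g y0) (g z)) (tX (g y0))) (RX (g y0) (g y0))"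
            using mono_l[OF rdiv_mono[OF gm[OF y0 z]]] gt[OF y0] by simp
          also have "\<dots> \<le> RX (g y0) (g z)" by (rule Xt) (use gX gy0 z in auto)
          finally show "m (rdiv m (RY y0 z) (tY y0)) (RX (g y0) (g y0)) \<le> cograph RX g (g y0) z"
            unfolding cograph_def .
        qed
      qed (use gy0 in auto)
      moreover have "tY y0 \<le> RX (g y0) (g y0)" using Xr[OF gy0] gt[OF y0] by simp
      ultimately show ?thesis by (rule order_trans[rotated])
    qed
    show "tY y0 \<le> RY (f (g y0)) y0" using K8[OF t1 t2] s1 order_trans unfolding graph_def by meson
  qed
qed

lemma main:
  "(qgalois X tX RX Y tY RY f g
      \<longleftrightarrow> qgalois (PS m X tX RX) PS_ty (PS_rel m X tX) (PD m Y tY RY) PD_ty (PD_rel m Y tY)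
            (dist_up m X tX Y tY (graph RY f)) (dist_down m X tX Y tY (cograph RX g)))
   \<and> (qgalois X tX RX Y tY RY f g
      \<longleftrightarrow> qgalois (PS m Y tY RY) PS_ty (PS_rel m Y tY) (PS m X tX RX) PS_ty (PS_rel m X tX)
            (dist_pb m X tX Y tY (graph RY f)) (dist_pf m X tX Y tY (cograph RX g)))
   \<and> (qgalois X tX RX Y tY RY f g
      \<longleftrightarrow> qgalois (PD m Y tY RY) PD_ty (PD_rel m Y tY) (PD m X tX RX) PD_ty (PD_rel m X tX)
            (dist_dpb m X tX Y tY (graph RY f)) (dist_dpf m X tX Y tY (cograph RX g)))"
  using eq2 eq3 eq4 by blast

end


theorem theorem4p22:
  fixes m :: "'q::complete_lattice \<Rightarrow> 'q \<Rightarrow> 'q" and e :: 'q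
    and X :: "'a set" and tX :: "'a \<Rightarrow> 'q" and RX :: "'a \<Rightarrow> 'a \<Rightarrow> 'q"
    and Y :: "'b set" and tY :: "'b \<Rightarrow> 'q" and RY :: "'b \<Rightarrow> 'b \<Rightarrow> 'q"
    and f :: "'a \<Rightarrow> 'b" and g :: "'b \<Rightarrow> 'a"
  assumes Q: "quantale m e"
    and X: "qpreorder m X tX RX"
    and Y: "qpreorder m Y tY RY"
    and f: "qmono X tX RX Y tY RY f"
    and g: "qmono Y tY RY X tX RX g"
  shows
    "(qgalois X tX RX Y tY RY f g
      \<longleftrightarrow> qgalois (PS m X tX RX) PS_ty (PS_rel m X tX) (PD m Y tY RY) PD_ty (PD_rel m Y tY)
            (dist_up m X tX Y tY (graph RY f)) (dist_down m X tX Y tY (cograph RX g)))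
   \<and> (qgalois X tX RX Y tY RY f g
      \<longleftrightarrow> qgalois (PS m Y tY RY) PS_ty (PS_rel m Y tY) (PS m X tX RX) PS_ty (PS_rel m X tX)
            (dist_pb m X tX Y tY (graph RY f)) (dist_pf m X tX Y tY (cograph RX g)))
   \<and> (qgalois X tX RX Y tY RY f g
      \<longleftrightarrow> qgalois (PD m Y tY RY) PD_ty (PD_rel m Y tY) (PD m X tX RX) PD_ty (PD_rel m X tX)
            (dist_dpb m X tX Y tY (graph RY f)) (dist_dpf m X tX Y tY (cograph RX g)))"
  proof -
  interpret S: setting m e X tX RX Y tY RY f g
    by (rule setting.intro[OF quant.intro[OF Q] setting_axioms.intro[OF X Y f g]])
  show ?thesis by (rule S.main)
qed

end
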